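(* Suppose $f \in \mathbb{C}[x_1,\dots,x_n]_d$ has a local border decomposition with $r$ summands based at $[\ell]$, where $\ell\in\mathbb{C}[x_1,\dots,x_n]_1$ is nonzero. If $d \ge r-1$, then $f = \ell^{d-r+1} g$ for some homogeneous polynomial $g$ of degree $r-1$.
   Context: Let $\mathbb{C}(\epsilon)[\boldsymbol{x}]_1$ be the set of linear forms in $x_1,\dots,x_n$ with coefficients rational functions of $\epsilon$. A nonzero $\ell(\epsilon)\in\mathbb{C}(\epsilon)[\boldsymbol{x}]_1$ can be expanded as a Laurent series $\ell(\epsilon)=\sum_{i\ge q}\epsilon^i \ell_i$ with $\ell_i\in\mathbb{C}[\boldsymbol{x}]_1$, $\ell_q\neq 0$; its projective limit is $\lim_{\epsilon\to0}[\ell(\epsilon)] := [\ell_q]$. A local border decomposition of $f$ with $r$ summands based at $[\ell]$ is an expression $f=\lim_{\epsilon\to0}\sum_{k=1}^r \ell_k^d$ (limit taken coefficientwise) with $\ell_k\in\mathbb{C}(\epsilon)[\boldsymbol{x}]_1$ and $\lim_{\epsilon\to0}[\ell_k(\epsilon)]=[\ell]$ for all $k$. *)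

theory Defs
  imports "HOL-Library.Poly_Mapping" "HOL-Computational_Algebra.Polynomial_FPS"
          "HOL-Computational_Algebra.Formal_Laurent_Series"
begin

text \<open>Polynomials in the variables x_0, x_1, ... with coefficients in 'a:
  finitely supported maps from monomials (exponent vectors) to coefficients,
  with the convolution (polynomial) product of HOL-Library.Poly_Mapping.\<close>
type_synonym 'a mpoly = "(nat \<Rightarrow>\<^sub>0 nat) \<Rightarrow>\<^sub>0 'a"

definition mono_deg :: "(nat \<Rightarrow>\<^sub>0 nat) \<Rightarrow> nat" where
  "mono_deg m = (\<Sum>i\<in>Poly_Mapping.keys m. Poly_Mapping.lookup m i)"

text \<open>p lies in K[x_1,...,x_n]_d: homogeneous of degree d (or zero),
  only variables with index < n occur.\<close>
definition hom_poly :: "nat \<Rightarrow> nat \<Rightarrow> 'a::zero mpoly \<Rightarrow> bool" where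
  "hom_poly n d p \<longleftrightarrow> (\<forall>m\<in>Poly_Mapping.keys p. mono_deg m = d \<and> (\<forall>i\<in>Poly_Mapping.keys m. i < n))"

text \<open>The field C(eps) of rational functions, viewed inside formal Laurent
  series C((eps)) via Laurent expansion at eps = 0: an element is rational
  iff it equals a quotient p/q of polynomials, q \<noteq> 0.\<close>
definition rat_fls :: "complex fls \<Rightarrow> bool" where
  "rat_fls c \<longleftrightarrow> (\<exists>p q :: complex poly. q \<noteq> 0 \<and>
      c * fps_to_fls (fps_of_poly q) = fps_to_fls (fps_of_poly p))"

definition rat_coeffs :: "complex fls mpoly \<Rightarrow> bool" where
  "rat_coeffs p \<longleftrightarrow> (\<forall>m. rat_fls (Poly_Mapping.lookup p m))"

definition laurent_coeff :: "complex fls mpoly \<Rightarrow> int \<Rightarrow> complex mpoly" where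
  "laurent_coeff p i = Poly_Mapping.map (\<lambda>c. fls_nth c i) p"

definition laurent_order :: "complex fls mpoly \<Rightarrow> int" where
  "laurent_order p = Min (fls_subdegree ` Poly_Mapping.lookup p ` Poly_Mapping.keys p)"

text \<open>Representative l_q of the projective limit of [l(eps)].\<close>
definition proj_lim_rep :: "complex fls mpoly \<Rightarrow> complex mpoly" where
  "proj_lim_rep p = laurent_coeff p (laurent_order p)"

definition proj_eq :: "complex mpoly \<Rightarrow> complex mpoly \<Rightarrow> bool" where
  "proj_eq a b \<longleftrightarrow> a \<noteq> 0 \<and> b \<noteq> 0 \<and> (\<exists>c. c \<noteq> 0 \<and> a = Poly_Mapping.map (\<lambda>x. c * x) b)"

definition coeffwise_lim :: "complex fls mpoly \<Rightarrow> complex mpoly \<Rightarrow> bool" where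
  "coeffwise_lim F f \<longleftrightarrow>
     (\<forall>m. (\<forall>i<0. fls_nth (Poly_Mapping.lookup F m) i = 0) \<and> fls_nth (Poly_Mapping.lookup F m) 0 = Poly_Mapping.lookup f m)"

definition local_border_dec ::
    "nat \<Rightarrow> nat \<Rightarrow> complex mpoly \<Rightarrow> nat \<Rightarrow> complex mpoly \<Rightarrow> (nat \<Rightarrow> complex fls mpoly) \<Rightarrow> bool" where
  "local_border_dec n d f r l ls \<longleftrightarrow>
     (\<forall>k<r. ls k \<noteq> 0 \<and> hom_poly n 1 (ls k) \<and> rat_coeffs (ls k)
            \<and> proj_eq (proj_lim_rep (ls k)) l)
     \<and> coeffwise_lim (\<Sum>k<r. ls k ^ d) f"

end

theory Submission
  imports Defs
begin


lemma lookup_map_pm: "f 0 = 0 \<Longrightarrow> Poly_Mapping.lookup (Poly_Mapping.map f p) k = f (Poly_Mapping.lookup p k)"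
  by (simp add: Poly_Mapping.map.rep_eq when_def)

lemma keys_map_pm: "Poly_Mapping.keys (Poly_Mapping.map f p) \<subseteq> Poly_Mapping.keys p"
  by (auto simp: in_keys_iff Poly_Mapping.map.rep_eq when_def)

lemma lookup_mult_fin:
  fixes f g :: "'a::comm_monoid_add \<Rightarrow>\<^sub>0 'b::comm_semiring_0"
  assumes "finite A" "Poly_Mapping.keys f \<subseteq> A" "finite B" "Poly_Mapping.keys g \<subseteq> B"
  shows "Poly_Mapping.lookup (f * g) k =
    (\<Sum>a\<in>A. \<Sum>b\<in>B. (Poly_Mapping.lookup f a * Poly_Mapping.lookup g b when k = a + b))"
proof -
  have inner: "(\<Sum>q. Poly_Mapping.lookup g q when k = l + q) =
      (\<Sum>b\<in>B. Poly_Mapping.lookup g b when k = l + b)" for l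
    by (rule Sum_any.expand_superset) (use assms in \<open>auto simp: in_keys_iff\<close>)
  have "Poly_Mapping.lookup (f * g) k =
     (\<Sum>l. Poly_Mapping.lookup f l * (\<Sum>b\<in>B. Poly_Mapping.lookup g b when k = l + b))"
    by (simp add: lookup_mult inner)
  also have "\<dots> = (\<Sum>a\<in>A. Poly_Mapping.lookup f a * (\<Sum>b\<in>B. Poly_Mapping.lookup g b when k = a + b))"
    by (rule Sum_any.expand_superset) (use assms in \<open>auto simp: in_keys_iff dest!: mult_not_zero\<close>)
  also have "\<dots> = (\<Sum>a\<in>A. \<Sum>b\<in>B. (Poly_Mapping.lookup f a * Poly_Mapping.lookup g b when k = a + b))"
    by (simp add: sum_distrib_left mult_when)
  finally show ?thesis .
qed

lemma map_mult_hom: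
  fixes p q :: "'a::comm_monoid_add \<Rightarrow>\<^sub>0 'b::comm_semiring_0"
  assumes h0: "h 0 = (0::'c::comm_semiring_0)" and hadd: "\<And>x y. h (x + y) = h x + h y"
    and hmult: "\<And>x y. h (x * y) = h x * h y"
  shows "Poly_Mapping.map h (p * q) = Poly_Mapping.map h p * Poly_Mapping.map h q"
proof (rule poly_mapping_eqI)
  fix k
  have hsum: "h (sum F S) = sum (\<lambda>x. h (F x)) S" for F and S :: "'d set"
    by (induction S rule: infinite_finite_induct) (auto simp: h0 hadd)
  have hwhen: "h (x when P) = (h x when P)" for x P by (simp add: when_def h0)
  have "Poly_Mapping.lookup (Poly_Mapping.map h (p * q)) k = h (Poly_Mapping.lookup (p*q) k)"
    by (simp add: lookup_map_pm h0)
  also have "\<dots> = (\<Sum>a\<in>Poly_Mapping.keys p. \<Sum>b\<in>Poly_Mapping.keys q. (h (Poly_Mapping.lookup p a) * h (Poly_Mapping.lookup q b) when k = a + b))"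
    by (subst lookup_mult_fin[of "Poly_Mapping.keys p" p "Poly_Mapping.keys q" q]) (simp_all add: hsum hwhen hmult)
  also have "\<dots> = Poly_Mapping.lookup (Poly_Mapping.map h p * Poly_Mapping.map h q) k"
    by (subst lookup_mult_fin[of "Poly_Mapping.keys p" _ "Poly_Mapping.keys q"]) (auto simp: keys_map_pm lookup_map_pm h0)
  finally show "Poly_Mapping.lookup (Poly_Mapping.map h (p * q)) k = Poly_Mapping.lookup (Poly_Mapping.map h p * Poly_Mapping.map h q) k" .
qed

lemma map_add_hom:
  assumes "h 0 = 0" "\<And>x y. h (x + y) = h x + h y"
  shows "Poly_Mapping.map h (p + q) = Poly_Mapping.map h p + Poly_Mapping.map h (q::'a \<Rightarrow>\<^sub>0 'b::monoid_add)"
  by (rule poly_mapping_eqI) (simp add: lookup_map_pm lookup_add assms)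

lemma map_sum_hom:
  assumes "h 0 = (0::'c::comm_monoid_add)" "\<And>x y. h (x + y) = h x + h y"
  shows "Poly_Mapping.map h (sum F S) = (\<Sum>x\<in>S. Poly_Mapping.map h (F x :: 'a \<Rightarrow>\<^sub>0 'b::comm_monoid_add))"
  by (induction S rule: infinite_finite_induct) (auto simp: map_add_hom assms map_eq_zero_iff)

lemma map_one_hom:
  assumes "h 0 = 0" "h 1 = 1"
  shows "Poly_Mapping.map h (1 :: 'a::zero \<Rightarrow>\<^sub>0 'b::zero_neq_one) = (1::'a \<Rightarrow>\<^sub>0 'c::zero_neq_one)"
  by (rule poly_mapping_eqI) (simp add: lookup_map_pm lookup_one assms when_def)

lemma map_power_hom:
  fixes p :: "'a::comm_monoid_add \<Rightarrow>\<^sub>0 'b::comm_semiring_1"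
  assumes "h 0 = (0::'c::comm_semiring_1)" "h 1 = 1" "\<And>x y. h (x + y) = h x + h y" "\<And>x y. h (x * y) = h x * h y"
  shows "Poly_Mapping.map h (p ^ s) = Poly_Mapping.map h p ^ s"
  by (induction s) (auto simp: map_one_hom map_mult_hom assms)



lemma mono_deg_superset:
  assumes "finite S" "Poly_Mapping.keys m \<subseteq> S"
  shows "mono_deg m = sum (Poly_Mapping.lookup m) S"
  unfolding mono_deg_def
  by (rule sum.mono_neutral_left) (use assms in \<open>auto simp: in_keys_iff\<close>)

lemma keys_add_nat: "Poly_Mapping.keys (a + b :: 'x \<Rightarrow>\<^sub>0 nat) = Poly_Mapping.keys a \<union> Poly_Mapping.keys b"
  by (auto simp: in_keys_iff lookup_add)

lemma mono_deg_add: "mono_deg (a + b) = mono_deg a + mono_deg b"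
proof -
  let ?S = "Poly_Mapping.keys a \<union> Poly_Mapping.keys b"
  have "mono_deg (a+b) = sum (Poly_Mapping.lookup (a+b)) ?S"
    by (rule mono_deg_superset) (auto simp: keys_add_nat)
  moreover have "mono_deg a = sum (Poly_Mapping.lookup a) ?S" by (rule mono_deg_superset) auto
  moreover have "mono_deg b = sum (Poly_Mapping.lookup b) ?S" by (rule mono_deg_superset) auto
  ultimately show ?thesis by (simp add: lookup_add sum.distrib)
qed

lemma mono_deg_0 [simp]: "mono_deg 0 = 0"
  by (simp add: mono_deg_def)

lemma deg1_single:
  assumes "mono_deg m = 1" "i \<in> Poly_Mapping.keys m"
  shows "m = Poly_Mapping.single i 1"
proof -
  have fin: "finite (Poly_Mapping.keys m)" by simp
  have "mono_deg m = Poly_Mapping.lookup m i + sum (Poly_Mapping.lookup m) (Poly_Mapping.keys m - {i})"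
    unfolding mono_deg_def using assms(2) fin by (simp add: sum.remove)
  moreover have "Poly_Mapping.lookup m i \<ge> 1" using assms(2) by (simp add: in_keys_iff)
  ultimately have 1: "Poly_Mapping.lookup m i = 1" and 2: "sum (Poly_Mapping.lookup m) (Poly_Mapping.keys m - {i}) = 0"
    using assms(1) by auto
  have "Poly_Mapping.lookup m k = 0" if "k \<noteq> i" for k
  proof (rule ccontr)
    assume "Poly_Mapping.lookup m k \<noteq> 0"
    hence "k \<in> Poly_Mapping.keys m - {i}" using that by (simp add: in_keys_iff)
    hence "Poly_Mapping.lookup m k \<le> sum (Poly_Mapping.lookup m) (Poly_Mapping.keys m - {i})"
      using fin by (intro member_le_sum) auto
    with 2 \<open>Poly_Mapping.lookup m k \<noteq> 0\<close> show False by simp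
  qed
  thus ?thesis using 1 by (intro poly_mapping_eqI) (auto simp: lookup_single when_def)
qed

lemma hom_polyI: "(\<And>m. m \<in> Poly_Mapping.keys p \<Longrightarrow> mono_deg m = d \<and> (\<forall>i\<in>Poly_Mapping.keys m. i < n)) \<Longrightarrow> hom_poly n d p"
  by (auto simp: hom_poly_def)

lemma hom_poly_subset: "hom_poly n d p \<Longrightarrow> Poly_Mapping.keys q \<subseteq> Poly_Mapping.keys p \<Longrightarrow> hom_poly n d q"
  by (auto simp: hom_poly_def)

lemma hom_poly_0 [simp]: "hom_poly n d 0"
  by (simp add: hom_poly_def)

lemma hom_poly_union: "hom_poly n d p \<Longrightarrow> hom_poly n d q \<Longrightarrow> Poly_Mapping.keys r \<subseteq> Poly_Mapping.keys p \<union> Poly_Mapping.keys q \<Longrightarrow> hom_poly n d r"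
  unfolding hom_poly_def by (metis (no_types, lifting) UnE subsetD)

lemma hom_poly_add: "hom_poly n d p \<Longrightarrow> hom_poly n d q \<Longrightarrow> hom_poly n d (p + q)"
  by (rule hom_poly_union[OF _ _ keys_add])

lemma hom_poly_diff: "hom_poly n d p \<Longrightarrow> hom_poly n d q \<Longrightarrow> hom_poly n d (p - (q::_ \<Rightarrow>\<^sub>0 'a::ab_group_add))"
  by (rule hom_poly_union[OF _ _ keys_diff])

lemma hom_poly_uminus: "hom_poly n d p \<Longrightarrow> hom_poly n d (- (p::_ \<Rightarrow>\<^sub>0 'a::ab_group_add))"
  unfolding hom_poly_def by simp

lemma hom_poly_sum: "(\<And>x. x \<in> S \<Longrightarrow> hom_poly n d (F x)) \<Longrightarrow> hom_poly n d (sum F S)"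
  by (induction S rule: infinite_finite_induct) (simp_all add: hom_poly_add)

lemma hom_poly_map: "hom_poly n d p \<Longrightarrow> hom_poly n d (Poly_Mapping.map h p)"
  by (rule hom_poly_subset[OF _ keys_map_pm])

lemma hom_poly_mult:
  fixes p q :: "'a::comm_semiring_0 mpoly"
  assumes "hom_poly n a p" "hom_poly n b q"
  shows "hom_poly n (a + b) (p * q)"
proof (rule hom_polyI)
  fix m assume "m \<in> Poly_Mapping.keys (p * q)"
  then obtain x y where "m = x + y" "x \<in> Poly_Mapping.keys p" "y \<in> Poly_Mapping.keys q"
    using keys_mult by blast
  thus "mono_deg m = a + b \<and> (\<forall>i\<in>Poly_Mapping.keys m. i < n)"
    using assms unfolding hom_poly_def by (simp add: mono_deg_add keys_add_nat) blast
qed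

lemma hom_poly_single0: "hom_poly n 0 (Poly_Mapping.single 0 c)"
  by (auto simp: hom_poly_def)

lemma hom_poly_one: "hom_poly n 0 (1::'a::zero_neq_one mpoly)"
  by (auto simp: hom_poly_def)

lemma hom_poly_of_nat: "hom_poly n 0 (of_nat c :: 'a::{semiring_1} mpoly)"
  by (metis hom_poly_single0 single_of_nat)

lemma hom_poly_power:
  fixes p :: "'a::comm_semiring_1 mpoly"
  assumes "hom_poly n 1 p" shows "hom_poly n s (p ^ s)"
proof (induction s)
  case 0 thus ?case by (simp add: hom_poly_one)
next
  case (Suc s) thus ?case using hom_poly_mult[OF assms Suc] by simp
qed

definition FR :: "nat \<Rightarrow> 'a::zero mpoly \<Rightarrow> bool" where
  "FR j p \<longleftrightarrow> (\<forall>m\<in>Poly_Mapping.keys p. Poly_Mapping.lookup m j = 0)"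

lemma FR_subset: "FR j p \<Longrightarrow> Poly_Mapping.keys q \<subseteq> Poly_Mapping.keys p \<Longrightarrow> FR j q"
  by (auto simp: FR_def)

lemma FR_0 [simp]: "FR j 0" by (simp add: FR_def)

lemma FR_union: "FR j p \<Longrightarrow> FR j q \<Longrightarrow> Poly_Mapping.keys r \<subseteq> Poly_Mapping.keys p \<union> Poly_Mapping.keys q \<Longrightarrow> FR j r"
  unfolding FR_def by (metis (no_types, lifting) UnE subsetD)

lemma FR_add: "FR j p \<Longrightarrow> FR j q \<Longrightarrow> FR j (p + q)"
  by (rule FR_union[OF _ _ keys_add])

lemma FR_diff: "FR j p \<Longrightarrow> FR j q \<Longrightarrow> FR j (p - (q::_ \<Rightarrow>\<^sub>0 'a::ab_group_add))"
  by (rule FR_union[OF _ _ keys_diff])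

lemma FR_sum: "(\<And>x. x \<in> S \<Longrightarrow> FR j (F x)) \<Longrightarrow> FR j (sum F S)"
  by (induction S rule: infinite_finite_induct) (simp_all add: FR_add)

lemma FR_map: "FR j p \<Longrightarrow> FR j (Poly_Mapping.map h p)"
  by (rule FR_subset[OF _ keys_map_pm])

lemma FR_mult:
  fixes p q :: "'a::comm_semiring_0 mpoly"
  assumes "FR j p" "FR j q"
  shows "FR j (p * q)"
  unfolding FR_def
proof
  fix m assume "m \<in> Poly_Mapping.keys (p * q)"
  then obtain x y where "m = x + y" "x \<in> Poly_Mapping.keys p" "y \<in> Poly_Mapping.keys q"
    using keys_mult by blast
  thus "Poly_Mapping.lookup m j = 0"
    using assms unfolding FR_def by (simp add: lookup_add)
qed

lemma FR_one: "FR j (1::'a::zero_neq_one mpoly)"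
  by (auto simp: FR_def)

lemma FR_single0: "FR j (Poly_Mapping.single 0 c)"
  by (auto simp: FR_def)

lemma FR_of_nat: "FR j (of_nat c :: 'a::{semiring_1} mpoly)"
  by (metis FR_single0 single_of_nat)

lemma FR_power:
  fixes p :: "'a::comm_semiring_1 mpoly"
  assumes "FR j p" shows "FR j (p ^ s)"
  by (induction s) (auto simp: FR_one FR_mult assms)



type_synonym qpoly = "complex fls mpoly"

definition ORD :: "int \<Rightarrow> qpoly \<Rightarrow> bool" where
  "ORD t p \<longleftrightarrow> (\<forall>m i. i < t \<longrightarrow> fls_nth (Poly_Mapping.lookup p m) i = 0)"

definition cf :: "int \<Rightarrow> qpoly \<Rightarrow> complex mpoly" where
  "cf i p = Poly_Mapping.map (\<lambda>c. fls_nth c i) p"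

definition E :: "complex mpoly \<Rightarrow> qpoly" where
  "E p = Poly_Mapping.map fls_const p"

lemma lookup_cf: "Poly_Mapping.lookup (cf i p) m = fls_nth (Poly_Mapping.lookup p m) i"
  by (simp add: cf_def lookup_map_pm)

lemma lookup_E: "Poly_Mapping.lookup (E p) m = fls_const (Poly_Mapping.lookup p m)"
  by (simp add: E_def lookup_map_pm)

lemma ORD_0 [simp]: "ORD t 0" by (simp add: ORD_def)

lemma ORD_add: "ORD t p \<Longrightarrow> ORD t q \<Longrightarrow> ORD t (p + q)"
  by (simp add: ORD_def lookup_add fls_plus_nth)

lemma ORD_diff: "ORD t p \<Longrightarrow> ORD t q \<Longrightarrow> ORD t (p - q)"
  by (simp add: ORD_def lookup_minus fls_minus_nth)

lemma ORD_uminus: "ORD t p \<Longrightarrow> ORD t (- p)"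
  by (simp add: ORD_def fls_uminus_nth)

lemma ORD_sum: "(\<And>x. x \<in> S \<Longrightarrow> ORD t (F x)) \<Longrightarrow> ORD t (sum F S)"
  by (induction S rule: infinite_finite_induct) (simp_all add: ORD_add)

lemma ORD_mono: "ORD t p \<Longrightarrow> s \<le> t \<Longrightarrow> ORD s p"
  by (simp add: ORD_def)

lemma fls_mult_low:
  fixes c d :: "complex fls"
  assumes "\<And>i. i < a \<Longrightarrow> fls_nth c i = 0" "\<And>i. i < b \<Longrightarrow> fls_nth d i = 0" "i < a + b"
  shows "fls_nth (c * d) i = 0"
proof (cases "c = 0 \<or> d = 0")
  case True thus ?thesis by auto
next
  case False
  hence "a \<le> fls_subdegree c" "b \<le> fls_subdegree d"
    using assms by (auto intro!: fls_subdegree_geI)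
  thus ?thesis using assms(3) by (intro fls_times_nth_eq0) simp
qed

lemma ORD_mult:
  assumes "ORD a p" "ORD b q"
  shows "ORD (a + b) (p * q)"
  unfolding ORD_def
proof (intro allI impI)
  fix m i assume i: "i < a + b"
  have "fls_nth (Poly_Mapping.lookup (p * q) m) i =
    (\<Sum>x\<in>Poly_Mapping.keys p. \<Sum>y\<in>Poly_Mapping.keys q.
       fls_nth (Poly_Mapping.lookup p x * Poly_Mapping.lookup q y when m = x + y) i)"
    by (subst lookup_mult_fin[of "Poly_Mapping.keys p" _ "Poly_Mapping.keys q"]) (simp_all add: fls_nth_sum)
  also have "\<dots> = 0"
  proof (intro sum.neutral ballI)
    fix x y
    have "fls_nth (Poly_Mapping.lookup p x * Poly_Mapping.lookup q y) i = 0"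
      by (rule fls_mult_low[OF _ _ i]) (use assms in \<open>auto simp: ORD_def\<close>)
    thus "fls_nth (Poly_Mapping.lookup p x * Poly_Mapping.lookup q y when m = x + y) i = 0"
      by (simp add: when_def)
  qed
  finally show "fls_nth (Poly_Mapping.lookup (p * q) m) i = 0" .
qed

lemma ORD_E: "ORD 0 (E p)"
  by (simp add: ORD_def lookup_E)

lemma ORD_one: "ORD 0 1"
  by (simp add: ORD_def lookup_one when_def)

lemma ORD_power: "ORD 0 p \<Longrightarrow> ORD 0 (p ^ s)"
  by (induction s) (auto simp: ORD_one dest: ORD_mult)

lemma ORD_of_nat: "ORD 0 (of_nat c)"
  by (simp add: ORD_def lookup_of_nat when_def)

lemma cf_0 [simp]: "cf i 0 = 0"
  by (rule poly_mapping_eqI) (simp add: lookup_cf)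

lemma E_0 [simp]: "E 0 = 0"
  by (rule poly_mapping_eqI) (simp add: lookup_E)

lemma cf_add: "cf i (p + q) = cf i p + cf i q"
  by (rule poly_mapping_eqI) (simp add: lookup_cf lookup_add fls_plus_nth)

lemma cf_diff: "cf i (p - q) = cf i p - cf i q"
  by (rule poly_mapping_eqI) (simp add: lookup_cf lookup_minus fls_minus_nth)

lemma cf_uminus: "cf i (- p) = - cf i p"
  by (rule poly_mapping_eqI) (simp add: lookup_cf fls_uminus_nth)

lemma cf_sum: "cf i (sum F S) = (\<Sum>x\<in>S. cf i (F x))"
  by (induction S rule: infinite_finite_induct) (simp_all add: cf_add)

lemma cf_ORD: "ORD t p \<Longrightarrow> i < t \<Longrightarrow> cf i p = 0"
  by (rule poly_mapping_eqI) (simp add: lookup_cf ORD_def)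

lemma cf_E_mult: "cf i (E p * q) = p * cf i q"
proof (rule poly_mapping_eqI)
  fix m
  have kE: "Poly_Mapping.keys (E p) \<subseteq> Poly_Mapping.keys p" unfolding E_def by (rule keys_map_pm)
  have kc: "Poly_Mapping.keys (cf i q) \<subseteq> Poly_Mapping.keys q" unfolding cf_def by (rule keys_map_pm)
  have "Poly_Mapping.lookup (cf i (E p * q)) m =
    (\<Sum>x\<in>Poly_Mapping.keys p. \<Sum>y\<in>Poly_Mapping.keys q.
       fls_nth (Poly_Mapping.lookup (E p) x * Poly_Mapping.lookup q y when m = x + y) i)"
    by (simp add: lookup_cf, subst lookup_mult_fin[of "Poly_Mapping.keys p" _ "Poly_Mapping.keys q"])
      (simp_all add: fls_nth_sum kE)
  also have "\<dots> = (\<Sum>x\<in>Poly_Mapping.keys p. \<Sum>y\<in>Poly_Mapping.keys q.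
       (Poly_Mapping.lookup p x * Poly_Mapping.lookup (cf i q) y when m = x + y))"
    by (intro sum.cong refl) (simp add: when_def lookup_E lookup_cf fls_mult_const_nth)
  also have "\<dots> = Poly_Mapping.lookup (p * cf i q) m"
    by (subst lookup_mult_fin[of "Poly_Mapping.keys p" _ "Poly_Mapping.keys q"]) (simp_all add: kc)
  finally show "Poly_Mapping.lookup (cf i (E p * q)) m = Poly_Mapping.lookup (p * cf i q) m" .
qed

lemma E_mult: "E (p * q) = E p * E q"
  unfolding E_def by (rule map_mult_hom) (simp_all add: fls_plus_const fls_const_mult_const)

lemma E_add: "E (p + q) = E p + E q"
  unfolding E_def by (rule map_add_hom) (simp_all add: fls_plus_const)

lemma E_one: "E 1 = 1"
  unfolding E_def by (rule map_one_hom) simp_all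

lemma E_power: "E (p ^ s) = E p ^ s"
  unfolding E_def by (rule map_power_hom) (simp_all add: fls_plus_const fls_const_mult_const)

lemma E_of_nat: "E (of_nat c) = of_nat c"
  by (induction c) (simp_all add: E_add E_one)

lemma lookup_single0_mult: "Poly_Mapping.lookup (Poly_Mapping.single 0 c * p) m = c * Poly_Mapping.lookup p m"
  by (simp add: mult_map_scale_conv_mult[symmetric] lookup_map_pm)

lemma keys_single0_mult: "Poly_Mapping.keys (Poly_Mapping.single 0 c * p) \<subseteq> Poly_Mapping.keys p"
  by (metis keys_map_pm mult_map_scale_conv_mult)

lemma single0_power: "Poly_Mapping.single 0 (a::'a::comm_semiring_1) ^ d = Poly_Mapping.single (0::'k::comm_monoid_add) (a ^ d)"
  by (induction d) (simp_all add: mult_single)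

lemma ORD_single0_mult: "ORD 0 p \<Longrightarrow> (\<And>i. i < t \<Longrightarrow> fls_nth c i = 0) \<Longrightarrow> ORD t (Poly_Mapping.single 0 c * p)"
  unfolding ORD_def lookup_single0_mult
  by (auto intro!: fls_mult_low[where a=t and b=0, simplified])



lemma FR_uminus: "FR j (- p) \<longleftrightarrow> FR j (p :: 'a::ab_group_add mpoly)"
  by (simp add: FR_def)

lemma key_lemma:
  fixes l X :: "complex mpoly"
  assumes hl: "hom_poly n 1 l" and u: "u \<in> Poly_Mapping.keys l" and uj: "u = Poly_Mapping.single j 1"
    and fr: "FR j (l * X)"
  shows "X = 0"
proof (rule ccontr)
  assume X0: "X \<noteq> 0"
  let ?K = "(\<lambda>m. Poly_Mapping.lookup m j) ` Poly_Mapping.keys X"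
  define M where "M = Max ?K"
  have Kne: "?K \<noteq> {}" using X0 by simp
  have "M \<in> ?K" unfolding M_def using Kne by (intro Max_in) auto
  then obtain m0 where m0: "m0 \<in> Poly_Mapping.keys X" "Poly_Mapping.lookup m0 j = M" by auto
  have Mmax: "Poly_Mapping.lookup b j \<le> M" if "b \<in> Poly_Mapping.keys X" for b
    unfolding M_def using that by (intro Max_ge) auto
  have uj1: "Poly_Mapping.lookup u j = 1" using uj by simp
  have iff: "(u + m0 = a + b) \<longleftrightarrow> (a = u \<and> b = m0)"
    if a: "a \<in> Poly_Mapping.keys l" and b: "b \<in> Poly_Mapping.keys X" for a b
  proof
    assume eq: "u + m0 = a + b"
    show "a = u \<and> b = m0"
    proof (cases "Poly_Mapping.lookup a j = 0")
      case True
      have "Poly_Mapping.lookup (u + m0) j = Poly_Mapping.lookup (a + b) j" using eq by simp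
      hence "1 + M = Poly_Mapping.lookup b j" using True uj1 m0 by (simp add: lookup_add)
      with Mmax[OF b] show ?thesis by simp
    next
      case False
      have "mono_deg a = 1" using hl a by (simp add: hom_poly_def)
      hence "a = Poly_Mapping.single j 1" using False by (intro deg1_single) (simp_all add: in_keys_iff)
      hence "a = u" using uj by simp
      with eq show ?thesis by simp
    qed
  qed simp
  have "Poly_Mapping.lookup (l * X) (u + m0) =
    (\<Sum>a\<in>Poly_Mapping.keys l. \<Sum>b\<in>Poly_Mapping.keys X.
       (Poly_Mapping.lookup l a * Poly_Mapping.lookup X b when u + m0 = a + b))"
    by (rule lookup_mult_fin) auto
  also have "\<dots> = (\<Sum>a\<in>Poly_Mapping.keys l. \<Sum>b\<in>Poly_Mapping.keys X.
       (if a = u then (if b = m0 then Poly_Mapping.lookup l a * Poly_Mapping.lookup X b else 0) else 0))"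
    by (intro sum.cong refl) (simp add: iff when_def)
  also have "\<dots> = (\<Sum>a\<in>Poly_Mapping.keys l. (if a = u then Poly_Mapping.lookup l a * Poly_Mapping.lookup X m0 else 0))"
    by (intro sum.cong refl) (use m0(1) in \<open>simp add: sum.delta\<close>)
  also have "\<dots> = Poly_Mapping.lookup l u * Poly_Mapping.lookup X m0"
    using u by (simp add: sum.delta)
  finally have "Poly_Mapping.lookup (l * X) (u + m0) \<noteq> 0"
    using u m0(1) by (simp add: in_keys_iff)
  hence "u + m0 \<in> Poly_Mapping.keys (l * X)" by (simp add: in_keys_iff)
  with fr have "Poly_Mapping.lookup (u + m0) j = 0" by (simp add: FR_def)
  thus False using uj1 by (simp add: lookup_add)
qed

lemma uniqueness:
  fixes l :: "complex mpoly" and Q :: "nat \<Rightarrow> complex mpoly"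
  assumes hl: "hom_poly n 1 l" and u: "u \<in> Poly_Mapping.keys l" and uj: "u = Poly_Mapping.single j 1"
  shows "(\<forall>s\<le>d. FR j (Q s)) \<Longrightarrow> (\<Sum>s\<le>d. l ^ (d - s) * Q s) = 0 \<Longrightarrow> \<forall>s\<le>d. Q s = 0"
proof (induction d)
  case 0 thus ?case by simp
next
  case (Suc d)
  let ?X = "\<Sum>s\<le>d. l ^ (d - s) * Q s"
  have "(\<Sum>s\<le>Suc d. l ^ (Suc d - s) * Q s) = (\<Sum>s\<le>d. l ^ (Suc d - s) * Q s) + Q (Suc d)"
    by simp
  also have "(\<Sum>s\<le>d. l ^ (Suc d - s) * Q s) = l * ?X"
    by (simp add: sum_distrib_left Suc_diff_le mult.assoc)
  finally have eq: "l * ?X = - Q (Suc d)" using Suc.prems(2) by (simp add: eq_neg_iff_add_eq_0)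
  have "FR j (l * ?X)" unfolding eq FR_uminus using Suc.prems(1) by simp
  hence X0: "?X = 0" by (rule key_lemma[OF hl u uj])
  hence "Q (Suc d) = 0" using eq by simp
  moreover have "\<forall>s\<le>d. Q s = 0" using Suc.IH Suc.prems(1) X0 by simp
  ultimately show ?case by (simp add: le_Suc_eq) 
qed



lemma summand_decomp:
  fixes L :: qpoly and l :: "complex mpoly"
  assumes L0: "L \<noteq> 0" and hL: "hom_poly n 1 L" and pe: "proj_eq (proj_lim_rep L) l"
    and hl: "hom_poly n 1 l" and u: "u \<in> Poly_Mapping.keys l" and uj: "u = Poly_Mapping.single j 1"
  shows "\<exists>\<alpha> \<beta>. \<alpha> \<noteq> 0 \<and> L = Poly_Mapping.single 0 \<alpha> * (E l + \<beta>) \<and> ORD 1 \<beta> \<and> hom_poly n 1 \<beta> \<and> FR j \<beta>"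
proof -
  define q where "q = laurent_order L"
  have low: "fls_nth (Poly_Mapping.lookup L m) i = 0" if "i < q" for m i
  proof (cases "m \<in> Poly_Mapping.keys L")
    case True
    have "q \<le> fls_subdegree (Poly_Mapping.lookup L m)"
      unfolding q_def laurent_order_def using True by (intro Min_le) auto
    thus ?thesis using that by simp
  next
    case False thus ?thesis by (simp add: in_keys_iff)
  qed
  from pe obtain c where c0: "c \<noteq> 0" and ceq: "proj_lim_rep L = Poly_Mapping.map (\<lambda>x. c * x) l"
    by (auto simp: proj_eq_def)
  have atq: "fls_nth (Poly_Mapping.lookup L m) q = c * Poly_Mapping.lookup l m" for m
  proof -
    have "Poly_Mapping.lookup (proj_lim_rep L) m = Poly_Mapping.lookup (Poly_Mapping.map (\<lambda>x. c * x) l) m"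
      by (simp add: ceq)
    thus ?thesis by (simp add: proj_lim_rep_def laurent_coeff_def lookup_map_pm q_def)
  qed
  define au where "au = Poly_Mapping.lookup l u"
  have au0: "au \<noteq> 0" using u by (simp add: au_def in_keys_iff)
  define \<alpha> where "\<alpha> = Poly_Mapping.lookup L u * fls_const (inverse au)"
  have \<alpha>nth: "fls_nth \<alpha> i = fls_nth (Poly_Mapping.lookup L u) i * inverse au" for i
    by (simp add: \<alpha>_def fls_mult_const_nth)
  have \<alpha>q: "fls_nth \<alpha> q = c" using au0 by (simp add: \<alpha>nth atq au_def)
  have \<alpha>low: "fls_nth \<alpha> i = 0" if "i < q" for i using that by (simp add: \<alpha>nth low)
  have \<alpha>0: "\<alpha> \<noteq> 0" using \<alpha>q c0 by auto
  have sd\<alpha>: "fls_subdegree \<alpha> = q" using \<alpha>q c0 \<alpha>low by (intro fls_subdegree_eqI) auto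
  define \<Lambda> where "\<Lambda> = L - Poly_Mapping.single 0 \<alpha> * E l"
  have lookup\<Lambda>: "Poly_Mapping.lookup \<Lambda> m = Poly_Mapping.lookup L m - \<alpha> * fls_const (Poly_Mapping.lookup l m)" for m
    by (simp add: \<Lambda>_def lookup_minus lookup_single0_mult lookup_E)
  have \<Lambda>low: "fls_nth (Poly_Mapping.lookup \<Lambda> m) i = 0" if "i < q + 1" for m i
  proof (cases "i < q")
    case True thus ?thesis by (simp add: lookup\<Lambda> fls_minus_nth fls_mult_const_nth low \<alpha>low)
  next
    case False
    hence "i = q" using that by simp
    thus ?thesis by (simp add: lookup\<Lambda> fls_minus_nth fls_mult_const_nth atq \<alpha>q)
  qed
  define \<beta> where "\<beta> = Poly_Mapping.single 0 (inverse \<alpha>) * \<Lambda>"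
  have ORD\<beta>: "ORD 1 \<beta>"
    unfolding ORD_def \<beta>_def lookup_single0_mult
  proof (intro allI impI)
    fix m and i :: int assume "i < 1"
    hence i: "i < - q + (q + 1)" by simp
    show "fls_nth (inverse \<alpha> * Poly_Mapping.lookup \<Lambda> m) i = 0"
    proof (rule fls_mult_low[OF _ _ i])
      fix k assume "k < - q"
      thus "fls_nth (inverse \<alpha>) k = 0" by (simp add: fls_inverse_subdegree sd\<alpha>)
    qed (rule \<Lambda>low)
  qed
  have Leq: "L = Poly_Mapping.single 0 \<alpha> * (E l + \<beta>)"
  proof -
    have "Poly_Mapping.single 0 \<alpha> * \<beta> = Poly_Mapping.single 0 (\<alpha> * inverse \<alpha>) * \<Lambda>"
      by (simp add: \<beta>_def mult.assoc[symmetric] mult_single)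
    also have "\<dots> = \<Lambda>" using \<alpha>0 by simp
    finally show ?thesis by (simp add: distrib_left \<Lambda>_def)
  qed
  have hE: "hom_poly n 1 (Poly_Mapping.single 0 \<alpha> * E l)"
    using hom_poly_mult[OF hom_poly_single0 hom_poly_map[OF hl]] by (simp add: E_def)
  have h\<beta>: "hom_poly n 1 \<beta>"
    unfolding \<beta>_def \<Lambda>_def by (rule hom_poly_subset[OF hom_poly_diff[OF hL hE] keys_single0_mult])
  have \<beta>u: "Poly_Mapping.lookup \<beta> u = 0"
  proof -
    have "fls_const (inverse au) * fls_const au = 1" using au0 by (simp add: fls_const_mult_const)
    hence "\<alpha> * fls_const au = Poly_Mapping.lookup L u" by (simp add: \<alpha>_def mult.assoc)
    thus ?thesis by (simp add: \<beta>_def lookup_single0_mult lookup\<Lambda> au_def)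
  qed
  have FR\<beta>: "FR j \<beta>"
    unfolding FR_def
  proof
    fix m assume m: "m \<in> Poly_Mapping.keys \<beta>"
    hence deg: "mono_deg m = 1" using h\<beta> by (simp add: hom_poly_def)
    show "Poly_Mapping.lookup m j = 0"
    proof (rule ccontr)
      assume "Poly_Mapping.lookup m j \<noteq> 0"
      hence "m = u" using deg1_single[OF deg] uj by (simp add: in_keys_iff)
      with m \<beta>u show False by (simp add: in_keys_iff)
    qed
  qed
  show ?thesis using \<alpha>0 Leq ORD\<beta> h\<beta> FR\<beta> by blast
qed



lemma poly_sum_le:
  fixes p :: "'a::comm_semiring_1 poly"
  assumes "degree p \<le> N" shows "poly p x = (\<Sum>i\<le>N. coeff p i * x ^ i)"
proof -
  have "poly p x = (\<Sum>i\<le>degree p. coeff p i * x ^ i)" by (rule poly_altdef)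
  also have "\<dots> = (\<Sum>i\<le>N. coeff p i * x ^ i)"
    by (rule sum.mono_neutral_left) (use assms in \<open>auto simp: coeff_eq_0\<close>)
  finally show ?thesis .
qed

lemma ORD_one_of: "ORD 1 p \<Longrightarrow> ORD 0 p"
  by (erule ORD_mono) simp

lemma G_coeffs:
  fixes \<beta> :: "nat \<Rightarrow> qpoly"
  assumes "\<forall>k<r. ORD 1 (\<beta> k)"
  shows "coeff (\<Prod>k<r. [:- \<beta> k, 1:]) r = 1 \<and> (\<forall>i<r. ORD 1 (coeff (\<Prod>k<r. [:- \<beta> k, 1:]) i))
     \<and> (\<forall>i>r. coeff (\<Prod>k<r. [:- \<beta> k, 1:]) i = 0)"
  using assms
proof (induction r)
  case 0 thus ?case by (auto simp: coeff_pCons split: nat.splits)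
next
  case (Suc r)
  let ?G = "\<Prod>k<r. [:- \<beta> k, 1:]"
  have IH: "coeff ?G r = 1" "\<And>i. i < r \<Longrightarrow> ORD 1 (coeff ?G i)" "\<And>i. i > r \<Longrightarrow> coeff ?G i = 0"
    using Suc by auto
  have br: "ORD 1 (\<beta> r)" using Suc.prems by simp
  have G0: "ORD 0 (coeff ?G i)" for i
    using IH by (cases "i < r"; cases "i = r") (auto simp: ORD_one ORD_one_of)
  have eq: "(\<Prod>k<Suc r. [:- \<beta> k, 1:]) = smult (- \<beta> r) ?G + pCons 0 ?G"
    by (simp add: mult_pCons_right)
  have c: "coeff (\<Prod>k<Suc r. [:- \<beta> k, 1:]) i = - \<beta> r * coeff ?G i + (case i of 0 \<Rightarrow> 0 | Suc i' \<Rightarrow> coeff ?G i')" for i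
    unfolding eq by (simp add: coeff_pCons)
  have neg: "ORD 1 (- \<beta> r * coeff ?G i)" for i
    using ORD_mult[OF ORD_uminus[OF br] G0[of i]] by simp
  have cs: "ORD 1 (case i of 0 \<Rightarrow> 0 | Suc i' \<Rightarrow> coeff ?G i')" if "i < Suc r" for i
    by (cases i) (use that IH(2) in auto)
  have low: "ORD 1 (coeff (\<Prod>k<Suc r. [:- \<beta> k, 1:]) i)" if "i < Suc r" for i
    unfolding c by (rule ORD_add[OF neg cs[OF that]])
  show ?case using IH c low by (auto split: nat.splits)
qed

lemma recurrence:
  fixes \<beta> w :: "nat \<Rightarrow> qpoly" and B :: "nat \<Rightarrow> qpoly"
  assumes b1: "\<forall>k<r. ORD 1 (\<beta> k)"
    and Bdef: "\<And>t. B t = (\<Sum>k<r. w k * \<beta> k ^ t)"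
    and rs: "r \<le> s" and prev: "\<And>t. t < s \<Longrightarrow> ORD 0 (B t)"
  shows "ORD 1 (B s)"
proof -
  define G where "G = (\<Prod>k<r. [:- \<beta> k, 1:])"
  have GC: "coeff G r = 1" "\<And>i. i < r \<Longrightarrow> ORD 1 (coeff G i)" "\<And>i. i > r \<Longrightarrow> coeff G i = 0"
    using G_coeffs[OF b1] unfolding G_def by auto
  have dG: "degree G \<le> r" using GC(3) by (intro degree_le) auto
  have root: "poly G (\<beta> k) = 0" if "k < r" for k
    unfolding G_def poly_prod using that by (intro prod_zero) auto
  have "0 = (\<Sum>k<r. w k * \<beta> k ^ (s - r) * poly G (\<beta> k))"
    by (simp add: root)
  also have "\<dots> = (\<Sum>k<r. \<Sum>i\<le>r. coeff G i * (w k * \<beta> k ^ (s - r + i)))"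
    by (intro sum.cong refl) (simp add: poly_sum_le[OF dG] sum_distrib_left power_add mult_ac)
  also have "\<dots> = (\<Sum>i\<le>r. coeff G i * B (s - r + i))"
    by (subst sum.swap) (simp add: Bdef sum_distrib_left)
  also have "\<dots> = (\<Sum>i<r. coeff G i * B (s - r + i)) + B s"
    using rs GC(1) by (simp add: lessThan_Suc_atMost[symmetric])
  finally have "B s = - (\<Sum>i<r. coeff G i * B (s - r + i))"
    by (simp add: eq_neg_iff_add_eq_0 add.commute)
  moreover have "ORD 1 (\<Sum>i<r. coeff G i * B (s - r + i))"
    by (rule ORD_sum) (use ORD_mult[OF GC(2) prev] rs in simp)
  ultimately show ?thesis by (simp add: ORD_uminus)
qed



lemma hom_poly_mult':
  fixes p q :: "'a::comm_semiring_0 mpoly"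
  shows "hom_poly n a p \<Longrightarrow> hom_poly n b q \<Longrightarrow> c = a + b \<Longrightarrow> hom_poly n c (p * q)"
  using hom_poly_mult by blast

theorem lemma7:
  fixes n d r :: nat and f l :: "complex mpoly" and ls :: "nat \<Rightarrow> complex fls mpoly"
  assumes "hom_poly n d f"
    and "hom_poly n 1 l" and "l \<noteq> 0"
    and "local_border_dec n d f r l ls"
    and "r - 1 \<le> d"
  shows "\<exists>g. hom_poly n (r - 1) g \<and> f = l ^ (d + 1 - r) * g"
proof -
  note hl = assms(2)
  from assms(3) obtain u where u: "u \<in> Poly_Mapping.keys l" by fastforce
  have du: "mono_deg u = 1" using hl u by (simp add: hom_poly_def)
  hence "Poly_Mapping.keys u \<noteq> {}" by (auto simp: mono_deg_def)
  then obtain j where j: "j \<in> Poly_Mapping.keys u" by blast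
  have uj: "u = Poly_Mapping.single j 1" by (rule deg1_single[OF du j])
  from assms(4) have lsk: "\<And>k. k < r \<Longrightarrow> ls k \<noteq> 0 \<and> hom_poly n 1 (ls k) \<and> proj_eq (proj_lim_rep (ls k)) l"
    and lim: "coeffwise_lim (\<Sum>k<r. ls k ^ d) f"
    by (auto simp: local_border_dec_def)
  have "\<forall>k. \<exists>p. k < r \<longrightarrow> (fst p \<noteq> 0 \<and> ls k = Poly_Mapping.single 0 (fst p) * (E l + snd p)
      \<and> ORD 1 (snd p) \<and> hom_poly n 1 (snd p) \<and> FR j (snd p))"
  proof
    fix k
    show "\<exists>p. k < r \<longrightarrow> (fst p \<noteq> 0 \<and> ls k = Poly_Mapping.single 0 (fst p) * (E l + snd p)
      \<and> ORD 1 (snd p) \<and> hom_poly n 1 (snd p) \<and> FR j (snd p))"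
    proof (cases "k < r")
      case True
      then obtain a b where "a \<noteq> 0 \<and> ls k = Poly_Mapping.single 0 a * (E l + b) \<and> ORD 1 b \<and> hom_poly n 1 b \<and> FR j b"
        using summand_decomp[of "ls k" n l u j] lsk[OF True] hl u uj by blast
      thus ?thesis by (intro exI[of _ "(a, b)"]) simp
    qed simp
  qed
  then obtain p where p: "\<And>k. k < r \<Longrightarrow> fst (p k) \<noteq> 0 \<and> ls k = Poly_Mapping.single 0 (fst (p k)) * (E l + snd (p k))
      \<and> ORD 1 (snd (p k)) \<and> hom_poly n 1 (snd (p k)) \<and> FR j (snd (p k))"
    by metis
  define \<alpha> where "\<alpha> k = fst (p k)" for k
  define \<beta> where "\<beta> k = snd (p k)" for k
  have lsdec: "ls k = Poly_Mapping.single 0 (\<alpha> k) * (E l + \<beta> k)" if "k < r" for k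
    using p[OF that] by (simp add: \<alpha>_def \<beta>_def)
  have \<beta>1: "\<forall>k<r. ORD 1 (\<beta> k)" using p by (simp add: \<beta>_def)
  have h\<beta>: "hom_poly n 1 (\<beta> k)" if "k < r" for k using p[OF that] by (simp add: \<beta>_def)
  have F\<beta>: "FR j (\<beta> k)" if "k < r" for k using p[OF that] by (simp add: \<beta>_def)
  define w :: "nat \<Rightarrow> qpoly" where "w k = Poly_Mapping.single 0 (\<alpha> k ^ d)" for k
  define B where "B t = (\<Sum>k<r. w k * \<beta> k ^ t)" for t
  define F where "F = (\<Sum>k<r. ls k ^ d)"
  define cb where "cb s = (of_nat (d choose s) :: complex mpoly)" for s
  have Fexp: "F = (\<Sum>s\<le>d. E (cb s * l ^ (d - s)) * B s)"
  proof -
    have "F = (\<Sum>k<r. \<Sum>s\<le>d. w k * (of_nat (d choose s) * \<beta> k ^ s * E l ^ (d - s)))"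
      unfolding F_def
    proof (intro sum.cong refl)
      fix k assume "k \<in> {..<r}"
      hence "ls k ^ d = w k * (\<beta> k + E l) ^ d"
        by (simp add: lsdec power_mult_distrib single0_power w_def add.commute)
      thus "ls k ^ d = (\<Sum>s\<le>d. w k * (of_nat (d choose s) * \<beta> k ^ s * E l ^ (d - s)))"
        by (simp add: binomial_ring sum_distrib_left)
    qed
    also have "\<dots> = (\<Sum>s\<le>d. \<Sum>k<r. E (cb s * l ^ (d - s)) * (w k * \<beta> k ^ s))"
      by (subst sum.swap) (intro sum.cong refl, simp add: E_mult E_of_nat E_power cb_def mult_ac)
    also have "\<dots> = (\<Sum>s\<le>d. E (cb s * l ^ (d - s)) * B s)"
      by (simp add: B_def sum_distrib_left)
    finally show ?thesis .
  qed
  have ORDF: "ORD 0 F" and cf0F: "cf 0 F = f"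
    using lim unfolding F_def[symmetric] coeffwise_lim_def ORD_def
    by (auto intro!: poly_mapping_eqI simp: lookup_cf)
  have cfF: "cf i F = (\<Sum>s\<le>d. l ^ (d - s) * (cb s * cf i (B s)))" for i
    unfolding Fexp cf_sum cf_E_mult by (simp add: mult_ac)
  have FRB: "FR j (B t)" for t
    unfolding B_def w_def by (intro FR_sum FR_mult FR_single0 FR_power F\<beta>) simp
  have hB: "hom_poly n t (B t)" for t
    unfolding B_def w_def
    by (intro hom_poly_sum hom_poly_mult'[OF hom_poly_single0 hom_poly_power[OF h\<beta>]]) simp_all
  have cb0: "cb s \<noteq> 0" if "s \<le> d" for s
    using that by (simp add: cb_def)
  have B0: "ORD 0 (B s)" if "s \<le> d" for s
    unfolding ORD_def
  proof (intro allI impI)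
    fix m and i :: int assume i: "i < 0"
    have "cf i F = 0" using cf_ORD[OF ORDF i] .
    hence "\<forall>s\<le>d. cb s * cf i (B s) = 0"
      unfolding cfF
      by (intro uniqueness[OF hl u uj]) (auto simp: cb_def intro!: FR_mult FR_of_nat FR_map FRB simp del: of_nat_eq_0_iff, simp add: cf_def FR_map FRB)
    hence "cf i (B s) = 0" using cb0[OF that] that by auto
    thus "fls_nth (Poly_Mapping.lookup (B s) m) i = 0"
      by (metis lookup_cf lookup_zero)
  qed
  have Bhigh: "cf 0 (B s) = 0" if "r \<le> s" "s \<le> d" for s
  proof -
    have "ORD 1 (B s)"
      by (rule recurrence[OF \<beta>1 B_def that(1)]) (use B0 that in auto)
    thus ?thesis by (rule cf_ORD) simp
  qed
  define g where "g = (\<Sum>s<r. cb s * l ^ (r - 1 - s) * cf 0 (B s))"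
  have "f = (\<Sum>s\<le>d. l ^ (d - s) * (cb s * cf 0 (B s)))"
    using cfF[of 0] cf0F by simp
  also have "\<dots> = (\<Sum>s<r. l ^ (d - s) * (cb s * cf 0 (B s)))"
    by (rule sum.mono_neutral_right) (use assms(5) Bhigh in auto)
  also have "\<dots> = (\<Sum>s<r. l ^ (d + 1 - r) * (cb s * l ^ (r - 1 - s) * cf 0 (B s)))"
  proof (intro sum.cong refl)
    fix s assume "s \<in> {..<r}"
    hence "d - s = (d + 1 - r) + (r - 1 - s)" using assms(5) by auto
    thus "l ^ (d - s) * (cb s * cf 0 (B s)) = l ^ (d + 1 - r) * (cb s * l ^ (r - 1 - s) * cf 0 (B s))"
      by (simp add: power_add mult_ac)
  qed
  also have "\<dots> = l ^ (d + 1 - r) * g"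
    by (simp add: g_def sum_distrib_left)
  finally have fg: "f = l ^ (d + 1 - r) * g" .
  have hg: "hom_poly n (r - 1) g"
    unfolding g_def
  proof (rule hom_poly_sum)
    fix s assume s: "s \<in> {..<r}"
    have h1: "hom_poly n (0 + (r - 1 - s)) (cb s * l ^ (r - 1 - s))"
      unfolding cb_def by (rule hom_poly_mult[OF hom_poly_of_nat hom_poly_power[OF hl]])
    show "hom_poly n (r - 1) (cb s * l ^ (r - 1 - s) * cf 0 (B s))"
      unfolding cf_def by (rule hom_poly_mult'[OF h1 hom_poly_map[OF hB[of s]]]) (use s in auto)
  qed
  show ?thesis using fg hg by blast
qed

end
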